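(* Let $G=(V,E)$ be a finite simple graph which is $S_{1,1,5}$-free, $K_4$-free, diamond-free and butterfly-free. Let $xy\in E$ and let $r$ be a vertex with $rx\in E$ and $ry\notin E$. For $i\ge 1$ let $N_i=\{z\in V:\operatorname{dist}_G(z,\{x,y\})=i\}$. Assume $N_2$ is an independent set and every vertex of $N_3$ has exactly one neighbor in $N_2$. If $|N_2|\ge 5$, then $N_6=\emptyset$.
   Context: $S_{1,1,5}$ is the tree with a center $u$ adjacent to $a$, $b$ and $z_1$, where $u,z_1,\dots,z_5$ is an induced path, and no other edges. A diamond is $K_4$ minus one edge; a butterfly consists of two disjoint edges (inducing $2K_2$) together with a vertex adjacent to all four of their endpoints. $\operatorname{dist}_G(z,\{x,y\})$ is the minimum of the distances from $z$ to $x$ and to $y$. *)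

theory Defs
  imports Main
begin

definition simple_graph :: "'a set \<Rightarrow> ('a \<Rightarrow> 'a \<Rightarrow> bool) \<Rightarrow> bool" where
  "simple_graph V E \<longleftrightarrow> finite V \<and> (\<forall>u v. E u v \<longrightarrow> E v u) \<and> (\<forall>u. \<not> E u u)
     \<and> (\<forall>u v. E u v \<longrightarrow> u \<in> V \<and> v \<in> V)"

definition has_induced :: "'a set \<Rightarrow> ('a \<Rightarrow> 'a \<Rightarrow> bool) \<Rightarrow> nat \<Rightarrow> (nat \<Rightarrow> nat \<Rightarrow> bool) \<Rightarrow> bool" where
  "has_induced V E n H \<longleftrightarrow> (\<exists>f. inj_on f {..<n} \<and> f ` {..<n} \<subseteq> V \<and>
     (\<forall>i<n. \<forall>j<n. i \<noteq> j \<longrightarrow> (E (f i) (f j) \<longleftrightarrow> H i j)))"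

definition edges_of :: "(nat \<times> nat) list \<Rightarrow> nat \<Rightarrow> nat \<Rightarrow> bool" where
  "edges_of es i j \<longleftrightarrow> (i, j) \<in> set es \<or> (j, i) \<in> set es"

text \<open>S_{1,1,5}: u=0, a=1, b=2, z1..z5 = 3..7.\<close>
definition S115 :: "nat \<Rightarrow> nat \<Rightarrow> bool" where
  "S115 = edges_of [(0,1),(0,2),(0,3),(3,4),(4,5),(5,6),(6,7)]"

definition K4 :: "nat \<Rightarrow> nat \<Rightarrow> bool" where
  "K4 = edges_of [(0,1),(0,2),(0,3),(1,2),(1,3),(2,3)]"

definition diamond :: "nat \<Rightarrow> nat \<Rightarrow> bool" where
  "diamond = edges_of [(0,1),(0,2),(0,3),(1,2),(1,3)]"

definition butterfly :: "nat \<Rightarrow> nat \<Rightarrow> bool" where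
  "butterfly = edges_of [(0,1),(2,3),(4,0),(4,1),(4,2),(4,3)]"

definition walk :: "'a set \<Rightarrow> ('a \<Rightarrow> 'a \<Rightarrow> bool) \<Rightarrow> 'a list \<Rightarrow> bool" where
  "walk V E xs \<longleftrightarrow> xs \<noteq> [] \<and> set xs \<subseteq> V \<and> (\<forall>i. Suc i < length xs \<longrightarrow> E (xs ! i) (xs ! Suc i))"

definition walk_to :: "'a set \<Rightarrow> ('a \<Rightarrow> 'a \<Rightarrow> bool) \<Rightarrow> 'a \<Rightarrow> 'a set \<Rightarrow> nat \<Rightarrow> bool" where
  "walk_to V E z S k \<longleftrightarrow> (\<exists>xs. walk V E xs \<and> hd xs = z \<and> last xs \<in> S \<and> length xs = Suc k)"

definition dist_is :: "'a set \<Rightarrow> ('a \<Rightarrow> 'a \<Rightarrow> bool) \<Rightarrow> 'a \<Rightarrow> 'a set \<Rightarrow> nat \<Rightarrow> bool" where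
  "dist_is V E z S i \<longleftrightarrow> walk_to V E z S i \<and> (\<forall>j<i. \<not> walk_to V E z S j)"

definition layer :: "'a set \<Rightarrow> ('a \<Rightarrow> 'a \<Rightarrow> bool) \<Rightarrow> 'a set \<Rightarrow> nat \<Rightarrow> 'a set" where
  "layer V E S i = {z \<in> V. dist_is V E z S i}"

end

theory Submission
  imports Defs
begin

lemma ind_from_list:
  assumes "distinct xs" "set xs \<subseteq> V" "length xs = n"
    "\<forall>i<n. \<forall>j<n. i \<noteq> j \<longrightarrow> (E (xs!i) (xs!j) \<longleftrightarrow> H i j)"
  shows "has_induced V E n H"
  unfolding has_induced_def
proof (intro exI[of _ "\<lambda>i. xs ! i"] conjI)
  show "inj_on ((!) xs) {..<n}" using assms by (simp add: inj_on_def nth_eq_iff_index_eq)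
  show "(!) xs ` {..<n} \<subseteq> V" using assms by (auto simp: set_conv_nth)
qed (use assms in auto)

lemma ind_from_list2:
  assumes "simple_graph V E" "distinct xs" "set xs \<subseteq> V" "length xs = n"
    "\<And>i j. H i j = H j i"
    "\<forall>j<n. \<forall>i<j. (E (xs!i) (xs!j) \<longleftrightarrow> H i j)"
  shows "has_induced V E n H"
proof (rule ind_from_list[OF assms(2-4)], intro allI impI)
  fix i j assume ij: "i < n" "j < n" "i \<noteq> j"
  have es: "\<And>u v. E u v = E v u" using assms(1) unfolding simple_graph_def by blast
  show "E (xs ! i) (xs ! j) = H i j"
  proof (cases "i < j")
    case True thus ?thesis using assms(6) ij by blast
  next
    case False hence "j < i" using ij by simp
    thus ?thesis using assms(6) ij es assms(5) by metis
  qed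
qed

lemma walk_to_0: "walk_to V E z S 0 \<longleftrightarrow> z \<in> V \<and> z \<in> S"
proof
  assume "walk_to V E z S 0"
  then obtain xs where "walk V E xs" "hd xs = z" "last xs \<in> S" "length xs = 1"
    unfolding walk_to_def by auto
  thus "z \<in> V \<and> z \<in> S" unfolding walk_def by (auto simp: length_Suc_conv)
next
  assume "z \<in> V \<and> z \<in> S"
  thus "walk_to V E z S 0" unfolding walk_to_def walk_def by (intro exI[of _ "[z]"]) auto
qed

lemma walk_to_Suc:
  assumes "simple_graph V E"
  shows "walk_to V E z S (Suc k) \<longleftrightarrow> (\<exists>w. E z w \<and> walk_to V E w S k)"
proof
  assume "walk_to V E z S (Suc k)"
  then obtain xs where xs: "walk V E xs" "hd xs = z" "last xs \<in> S" "length xs = Suc (Suc k)"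
    unfolding walk_to_def by blast
  obtain w ys where ys: "xs = z # w # ys"
  proof -
    obtain a zs where "xs = a # zs" using xs(4) by (cases xs) auto
    moreover obtain b ws where "zs = b # ws" using xs(4) calculation by (cases zs) auto
    ultimately show ?thesis using that[of b ws] xs(2) by simp
  qed
  have "walk V E (w # ys)" unfolding walk_def
  proof (intro conjI allI impI)
    show "set (w # ys) \<subseteq> V" using xs(1) unfolding ys walk_def by auto
    fix i assume "Suc i < length (w # ys)"
    hence "Suc (Suc i) < length xs" using ys by simp
    hence "E (xs ! Suc i) (xs ! Suc (Suc i))" using xs(1) unfolding walk_def by blast
    thus "E ((w # ys) ! i) ((w # ys) ! Suc i)" using ys by simp
  qed simp
  moreover have "Suc 0 < length xs" using xs(4) by simp
  hence "E (xs ! 0) (xs ! Suc 0)" using xs(1) unfolding walk_def by blast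
  hence "E z w" using ys by simp
  moreover have "hd (w # ys) = w" "last (w # ys) \<in> S" "length (w # ys) = Suc k"
    using xs(3,4) ys by auto
  ultimately show "\<exists>w. E z w \<and> walk_to V E w S k"
    unfolding walk_to_def by blast
next
  assume "\<exists>w. E z w \<and> walk_to V E w S k"
  then obtain w xs where w: "E z w" "walk V E xs" "hd xs = w" "last xs \<in> S" "length xs = Suc k"
    unfolding walk_to_def by blast
  have zV: "z \<in> V" using w(1) assms unfolding simple_graph_def by blast
  have "walk V E (z # xs)" unfolding walk_def
  proof (intro conjI allI impI)
    show "set (z # xs) \<subseteq> V" using w(2) zV unfolding walk_def by auto
    fix i assume i: "Suc i < length (z # xs)"
    show "E ((z # xs) ! i) ((z # xs) ! Suc i)"
    proof (cases i)
      case 0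
      have "xs \<noteq> []" using w(5) by auto
      hence "xs ! 0 = w" using w(3) hd_conv_nth[of xs] by simp
      thus ?thesis using w(1) 0 by simp
    next
      case (Suc m)
      have "Suc m < length xs" using i Suc by simp
      hence "E (xs ! m) (xs ! Suc m)" using w(2) unfolding walk_def by blast
      thus ?thesis using Suc by simp
    qed
  qed simp
  moreover have "xs \<noteq> []" using w(5) by auto
  ultimately show "walk_to V E z S (Suc k)" using w(4,5) unfolding walk_to_def
    by (intro exI[of _ "z # xs"]) simp
qed

lemma dist_unique: assumes "dist_is V E z S i" "dist_is V E z S j" shows "i = j"
proof -
  have "\<not> i < j" using assms unfolding dist_is_def by blast
  moreover have "\<not> j < i" using assms unfolding dist_is_def by blast
  ultimately show ?thesis by simp
qed

lemma dist_exists: "walk_to V E z S k \<Longrightarrow> \<exists>j\<le>k. dist_is V E z S j"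
proof -
  assume a: "walk_to V E z S k"
  define j where "j = (LEAST j. walk_to V E z S j)"
  have "walk_to V E z S j" unfolding j_def using a by (rule LeastI)
  moreover have "j \<le> k" unfolding j_def using a by (rule Least_le)
  moreover have "\<forall>i<j. \<not> walk_to V E z S i" unfolding j_def using not_less_Least by blast
  ultimately show ?thesis unfolding dist_is_def by blast
qed

lemma dist_adj:
  assumes "simple_graph V E" "E z w" "dist_is V E z S i" "dist_is V E w S j"
  shows "i \<le> Suc j"
proof -
  have "walk_to V E w S j" using assms(4) unfolding dist_is_def by blast
  hence "walk_to V E z S (Suc j)" using walk_to_Suc[OF assms(1), of z S j] assms(2) by blast
  hence "\<not> Suc j < i" using assms(3) unfolding dist_is_def by blast
  thus ?thesis by simp
qed

lemma dist_pred:
  assumes "simple_graph V E" "dist_is V E z S (Suc i)"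
  shows "\<exists>w. E z w \<and> dist_is V E w S i"
proof -
  have ws: "walk_to V E z S (Suc i)" using assms(2) unfolding dist_is_def by (rule conjunct1)
  have "\<exists>w. E z w \<and> walk_to V E w S i" using ws walk_to_Suc[OF assms(1), of z S i] by simp
  then obtain w where w: "E z w" "walk_to V E w S i" by blast
  obtain j where j: "j \<le> i" "dist_is V E w S j" using dist_exists[OF w(2)] by blast
  have "walk_to V E w S j" using j(2) unfolding dist_is_def by blast
  hence "walk_to V E z S (Suc j)" using w(1) walk_to_Suc[OF assms(1), of z S j] by blast
  hence "\<not> Suc j < Suc i" using assms(2) unfolding dist_is_def by blast
  hence "\<not> j < i" by simp
  hence "j = i" using j(1) by simp
  thus ?thesis using j w by blast
qed

lemma dist_0: "dist_is V E z S 0 \<longleftrightarrow> z \<in> V \<and> z \<in> S"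
  unfolding dist_is_def by (simp add: walk_to_0)

lemma dist_1:
  assumes "simple_graph V E" "E z s" "s \<in> S" "z \<notin> S"
  shows "dist_is V E z S 1"
proof -
  have "s \<in> V" using assms(1,2) unfolding simple_graph_def by blast
  hence "walk_to V E s S 0" using assms(3) walk_to_0[of V E s S] by blast
  hence "walk_to V E z S (Suc 0)" using walk_to_Suc[OF assms(1), of z S 0] assms(2) by blast
  moreover have "\<not> walk_to V E z S 0" using walk_to_0[of V E z S] assms(4) by blast
  ultimately show ?thesis unfolding dist_is_def by (simp add: less_Suc_eq)
qed

locale G =
  fixes V :: "'a set" and E :: "'a \<Rightarrow> 'a \<Rightarrow> bool" and x y :: 'a
  assumes sg: "simple_graph V E"
    and noS: "\<not> has_induced V E 8 S115"
    and noK4: "\<not> has_induced V E 4 K4"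
    and nodia: "\<not> has_induced V E 4 diamond"
    and nobut: "\<not> has_induced V E 5 butterfly"
    and xy: "E x y"
    and indep: "\<forall>u\<in>layer V E {x, y} 2. \<forall>v\<in>layer V E {x, y} 2. \<not> E u v"
    and uniq3: "\<forall>v\<in>layer V E {x, y} 3. card {w \<in> layer V E {x, y} 2. E v w} = 1"
begin

lemma sym: "E u v \<Longrightarrow> E v u" and irr: "\<not> E u u" and inV: "E u v \<Longrightarrow> u \<in> V" "E u v \<Longrightarrow> v \<in> V"
  using sg unfolding simple_graph_def by blast+

abbreviation L where "L i \<equiv> layer V E {x, y} i"

lemma L_def: "z \<in> L i \<longleftrightarrow> z \<in> V \<and> dist_is V E z {x,y} i"
  unfolding layer_def by simp

lemma L_uniq: "z \<in> L i \<Longrightarrow> z \<in> L j \<Longrightarrow> i = j"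
  using dist_unique L_def by metis

lemma L_adj: "E a b \<Longrightarrow> a \<in> L i \<Longrightarrow> b \<in> L j \<Longrightarrow> i \<le> Suc j"
  using dist_adj[OF sg] L_def by metis

lemma L_pred: "a \<in> L (Suc i) \<Longrightarrow> \<exists>b\<in>L i. E a b"
  using dist_pred[OF sg] L_def inV by metis

lemma L_0: "L 0 = {x, y}"
  using L_def inV xy by (auto simp: dist_0)

lemma L_1: "z \<in> L 1 \<longleftrightarrow> z \<in> V \<and> z \<noteq> x \<and> z \<noteq> y \<and> (E z x \<or> E z y)"
proof
  assume a: "z \<in> L 1"
  then obtain b where "b \<in> L 0" "E z b" using L_pred[of z 0] by auto
  moreover have "z \<notin> L 0" using a L_uniq by fastforce
  ultimately show "z \<in> V \<and> z \<noteq> x \<and> z \<noteq> y \<and> (E z x \<or> E z y)" using L_0 a L_def by auto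
next
  assume "z \<in> V \<and> z \<noteq> x \<and> z \<noteq> y \<and> (E z x \<or> E z y)"
  thus "z \<in> L 1" using dist_1[OF sg] L_def by blast
qed

lemma L_fin: "finite (L i)"
  using sg unfolding simple_graph_def layer_def by auto

lemma symi: "E u v = E v u" using sym by blast

lemma K4_found:
  assumes "E a b" "E a c" "E a d" "E b c" "E b d" "E c d" "c \<noteq> d"
  shows False
proof -
  have "distinct [a,b,c,d]" using assms irr by auto
  have "has_induced V E 4 K4"
    apply (rule ind_from_list2[OF sg \<open>distinct _\<close>])
    using assms inV apply auto[2]
     apply (auto simp: K4_def edges_of_def)[1]
    apply (simp add: All_less_Suc2 numeral_eq_Suc)
    apply (simp add: K4_def edges_of_def assms)
    done
  thus False using noK4 by blast
qed

lemma tri: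
  assumes "E a b" "E a c" "E b c" "E a d" "E b d" "c \<noteq> d"
  shows False
proof (cases "E c d")
  case True thus False using K4_found assms by blast
next
  case False
  have "distinct [a,b,c,d]" using assms irr by auto
  have "has_induced V E 4 diamond"
    apply (rule ind_from_list2[OF sg \<open>distinct _\<close>])
    using assms inV apply auto[2]
     apply (auto simp: diamond_def edges_of_def)[1]
    apply (simp add: All_less_Suc2 numeral_eq_Suc)
    apply (simp add: diamond_def edges_of_def assms False)
    done
  thus False using nodia by blast
qed

lemma nbhd:
  assumes "E v a" "E v b" "E a b" "E v c" "E v d" "E c d"
  shows "{a,b} = {c,d}"
proof (rule ccontr)
  assume ne: "{a,b} \<noteq> {c,d}"
  have ab: "a \<noteq> b" "c \<noteq> d" "v \<noteq> a" "v \<noteq> b" "v \<noteq> c" "v \<noteq> d" using assms irr by blast+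
  have s: "E b a" "E d c" using assms sym by auto
  show False
  proof (cases "a = c")
    case True hence "b \<noteq> d" using ne by auto
    thus False using tri[of v a b d] assms True by auto
  next
    case ac: False
    show False
    proof (cases "a = d")
      case True hence "b \<noteq> c" using ne by auto
      thus False using tri[of v a b c] assms s True by auto
    next
      case ad: False
      show False
      proof (cases "b = c")
        case True
        thus False using tri[of v b a d] assms s ad by auto
      next
        case bc: False
        show False
        proof (cases "b = d")
          case True
          thus False using tri[of v b a c] assms s ac by auto
        next
          case bd: False
          show False
          proof (cases "E a c \<or> E a d \<or> E b c \<or> E b d")
            case True
            then show False using tri[of v a b c] tri[of v a b d] tri[of v b a c] tri[of v b a d]
                assms s ac ad bc bd by auto
          next
            case nc: False
            have "has_induced V E 5 butterfly"
              apply (rule ind_from_list2[OF sg, of "[a,b,c,d,v]"])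
              using assms ac ad bc bd ab inV apply auto[3]
               apply (auto simp: butterfly_def edges_of_def)[1]
              apply (simp add: All_less_Suc2 numeral_eq_Suc)
              using assms s nc ab sym apply (simp add: butterfly_def edges_of_def)
              done
            thus False using nobut by blast
          qed
        qed
      qed
    qed
  qed
qed

lemma S_found:
  assumes "E c a" "E c b" "E c p1" "E p1 p2" "E p2 p3" "E p3 p4" "E p4 p5"
    "a \<noteq> b" "\<not> E a b" "\<not> E a p1" "\<not> E a p2" "\<not> E a p3" "\<not> E a p4" "\<not> E a p5" "\<not> E b p1" "\<not> E b p2" "\<not> E b p3" "\<not> E b p4" "\<not> E b p5" "\<not> E c p2" "\<not> E c p3" "\<not> E c p4" "\<not> E c p5" "\<not> E p1 p3" "\<not> E p1 p4" "\<not> E p1 p5" "\<not> E p2 p4" "\<not> E p2 p5" "\<not> E p3 p5"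
  shows False
proof -
  have sp: "E a c" "E b c" "E p1 c" "E p2 p1" "E p3 p2" "E p4 p3" "E p5 p4" using assms(1-7) sym by blast+
  have sn: "\<not> E b a" "\<not> E p1 a" "\<not> E p2 a" "\<not> E p3 a" "\<not> E p4 a" "\<not> E p5 a" "\<not> E p1 b" "\<not> E p2 b" "\<not> E p3 b" "\<not> E p4 b" "\<not> E p5 b" "\<not> E p2 c" "\<not> E p3 c" "\<not> E p4 c" "\<not> E p5 c" "\<not> E p3 p1" "\<not> E p4 p1" "\<not> E p5 p1" "\<not> E p4 p2" "\<not> E p5 p2" "\<not> E p5 p3" using assms(9-29) sym by blast+
  have "distinct [c,a,b,p1,p2,p3,p4,p5]" using assms sp sn irr by auto
  have "has_induced V E 8 S115"
    apply (rule ind_from_list2[OF sg \<open>distinct _\<close>])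
    using assms inV apply auto[2]
     apply (auto simp: S115_def edges_of_def)[1]
    apply (simp add: All_less_Suc2 numeral_eq_Suc)
    apply (simp add: S115_def edges_of_def assms)
    done
  thus False using noS by blast
qed

end


lemma three_elems:
  assumes "finite A" "3 \<le> card A"
  shows "\<exists>a b c. a \<in> A \<and> b \<in> A \<and> c \<in> A \<and> a \<noteq> b \<and> a \<noteq> c \<and> b \<noteq> c"
proof -
  obtain a B where "A = insert a B" "a \<notin> B" "2 \<le> card B" "finite B"
    using assms card_le_Suc_iff[of 2 A] by (auto simp: numeral_eq_Suc)
  moreover obtain b C where "B = insert b C" "b \<notin> C" "1 \<le> card C" "finite C"
    using calculation card_le_Suc_iff[of 1 B] by (auto simp: numeral_eq_Suc)
  moreover obtain c where "c \<in> C" using calculation by (metis card.empty ex_in_conv not_one_le_zero)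
  ultimately show ?thesis by blast
qed

context G begin

lemma nfE: "a \<in> L i \<Longrightarrow> b \<in> L j \<Longrightarrow> Suc i < j \<or> Suc j < i \<or> \<not> E a b \<Longrightarrow> \<not> E a b"
  using L_adj sym by fastforce

lemma far: "a \<in> L i \<Longrightarrow> b \<in> L j \<Longrightarrow> Suc i < j \<Longrightarrow> \<not> E a b"
  using nfE by blast

lemma neqL: "a \<in> L i \<Longrightarrow> b \<in> L j \<Longrightarrow> i \<noteq> j \<Longrightarrow> a \<noteq> b"
  using L_uniq by blast

lemma x0: "x \<in> L 0" "y \<in> L 0" using L_0 by auto

lemma S_lay:
  assumes "c \<in> L lc" "a \<in> L la" "b \<in> L lb" "p1 \<in> L l1" "p2 \<in> L l2" "p3 \<in> L l3" "p4 \<in> L l4" "p5 \<in> L l5"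
    "E c a \<or> E a c" "E c b \<or> E b c" "E c p1 \<or> E p1 c" "E p1 p2 \<or> E p2 p1" "E p2 p3 \<or> E p3 p2" "E p3 p4 \<or> E p4 p3" "E p4 p5 \<or> E p5 p4"
    "a \<noteq> b"
    "Suc la < lb \<or> Suc lb < la \<or> \<not> E a b \<or> \<not> E b a"
    "Suc la < l1 \<or> Suc l1 < la \<or> \<not> E a p1 \<or> \<not> E p1 a"
    "Suc la < l2 \<or> Suc l2 < la \<or> \<not> E a p2 \<or> \<not> E p2 a"
    "Suc la < l3 \<or> Suc l3 < la \<or> \<not> E a p3 \<or> \<not> E p3 a"
    "Suc la < l4 \<or> Suc l4 < la \<or> \<not> E a p4 \<or> \<not> E p4 a"
    "Suc la < l5 \<or> Suc l5 < la \<or> \<not> E a p5 \<or> \<not> E p5 a"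
    "Suc lb < l1 \<or> Suc l1 < lb \<or> \<not> E b p1 \<or> \<not> E p1 b"
    "Suc lb < l2 \<or> Suc l2 < lb \<or> \<not> E b p2 \<or> \<not> E p2 b"
    "Suc lb < l3 \<or> Suc l3 < lb \<or> \<not> E b p3 \<or> \<not> E p3 b"
    "Suc lb < l4 \<or> Suc l4 < lb \<or> \<not> E b p4 \<or> \<not> E p4 b"
    "Suc lb < l5 \<or> Suc l5 < lb \<or> \<not> E b p5 \<or> \<not> E p5 b"
    "Suc lc < l2 \<or> Suc l2 < lc \<or> \<not> E c p2 \<or> \<not> E p2 c"
    "Suc lc < l3 \<or> Suc l3 < lc \<or> \<not> E c p3 \<or> \<not> E p3 c"
    "Suc lc < l4 \<or> Suc l4 < lc \<or> \<not> E c p4 \<or> \<not> E p4 c"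
    "Suc lc < l5 \<or> Suc l5 < lc \<or> \<not> E c p5 \<or> \<not> E p5 c"
    "Suc l1 < l3 \<or> Suc l3 < l1 \<or> \<not> E p1 p3 \<or> \<not> E p3 p1"
    "Suc l1 < l4 \<or> Suc l4 < l1 \<or> \<not> E p1 p4 \<or> \<not> E p4 p1"
    "Suc l1 < l5 \<or> Suc l5 < l1 \<or> \<not> E p1 p5 \<or> \<not> E p5 p1"
    "Suc l2 < l4 \<or> Suc l4 < l2 \<or> \<not> E p2 p4 \<or> \<not> E p4 p2"
    "Suc l2 < l5 \<or> Suc l5 < l2 \<or> \<not> E p2 p5 \<or> \<not> E p5 p2"
    "Suc l3 < l5 \<or> Suc l5 < l3 \<or> \<not> E p3 p5 \<or> \<not> E p5 p3"
  shows False
proof -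
  have e0: "E c a" using assms(9) sym by blast
  have e1: "E c b" using assms(10) sym by blast
  have e2: "E c p1" using assms(11) sym by blast
  have e3: "E p1 p2" using assms(12) sym by blast
  have e4: "E p2 p3" using assms(13) sym by blast
  have e5: "E p3 p4" using assms(14) sym by blast
  have e6: "E p4 p5" using assms(15) sym by blast
  have n0: "\<not> E a b" by (rule nfE[OF assms(2) assms(3)]) (use assms(17) sym in blast)
  have n1: "\<not> E a p1" by (rule nfE[OF assms(2) assms(4)]) (use assms(18) sym in blast)
  have n2: "\<not> E a p2" by (rule nfE[OF assms(2) assms(5)]) (use assms(19) sym in blast)
  have n3: "\<not> E a p3" by (rule nfE[OF assms(2) assms(6)]) (use assms(20) sym in blast)
  have n4: "\<not> E a p4" by (rule nfE[OF assms(2) assms(7)]) (use assms(21) sym in blast)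
  have n5: "\<not> E a p5" by (rule nfE[OF assms(2) assms(8)]) (use assms(22) sym in blast)
  have n6: "\<not> E b p1" by (rule nfE[OF assms(3) assms(4)]) (use assms(23) sym in blast)
  have n7: "\<not> E b p2" by (rule nfE[OF assms(3) assms(5)]) (use assms(24) sym in blast)
  have n8: "\<not> E b p3" by (rule nfE[OF assms(3) assms(6)]) (use assms(25) sym in blast)
  have n9: "\<not> E b p4" by (rule nfE[OF assms(3) assms(7)]) (use assms(26) sym in blast)
  have n10: "\<not> E b p5" by (rule nfE[OF assms(3) assms(8)]) (use assms(27) sym in blast)
  have n11: "\<not> E c p2" by (rule nfE[OF assms(1) assms(5)]) (use assms(28) sym in blast)
  have n12: "\<not> E c p3" by (rule nfE[OF assms(1) assms(6)]) (use assms(29) sym in blast)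
  have n13: "\<not> E c p4" by (rule nfE[OF assms(1) assms(7)]) (use assms(30) sym in blast)
  have n14: "\<not> E c p5" by (rule nfE[OF assms(1) assms(8)]) (use assms(31) sym in blast)
  have n15: "\<not> E p1 p3" by (rule nfE[OF assms(4) assms(6)]) (use assms(32) sym in blast)
  have n16: "\<not> E p1 p4" by (rule nfE[OF assms(4) assms(7)]) (use assms(33) sym in blast)
  have n17: "\<not> E p1 p5" by (rule nfE[OF assms(4) assms(8)]) (use assms(34) sym in blast)
  have n18: "\<not> E p2 p4" by (rule nfE[OF assms(5) assms(7)]) (use assms(35) sym in blast)
  have n19: "\<not> E p2 p5" by (rule nfE[OF assms(5) assms(8)]) (use assms(36) sym in blast)
  have n20: "\<not> E p3 p5" by (rule nfE[OF assms(6) assms(8)]) (use assms(37) sym in blast)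
  show False by (rule S_found[of c a b p1 p2 p3 p4 p5]) (fact assms e0 e1 e2 e3 e4 e5 e6 n0 n1 n2 n3 n4 n5 n6 n7 n8 n9 n10 n11 n12 n13 n14 n15 n16 n17 n18 n19 n20)+
qed

context
  fixes z1 z2 z3 z4 z5 u
  assumes z1: "z1 \<in> L 2" and z2: "z2 \<in> L 3" and z3: "z3 \<in> L 4" and z4: "z4 \<in> L 5"
    and z5: "z5 \<in> L 6"
    and e12: "E z1 z2" and e23: "E z2 z3" and e34: "E z3 z4" and e45: "E z4 z5"
    and z2u: "\<forall>w\<in>L 2. E z2 w \<longrightarrow> w = z1"
    and u1: "u \<in> L 1" and uz1: "E u z1" and ux: "E u x"
begin

lemma nz2: assumes "a \<in> L la" "la \<le> 2" "a \<noteq> z1" shows "\<not> E a z2"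
proof
  assume h: "E a z2"
  show False
  proof (cases "la = 2")
    case True then have "a \<in> L 2" using assms(1) by simp
    thus False using z2u h sym assms(3) by blast
  next
    case False then have "Suc la < 3" using assms(2) by simp
    thus False using far[OF assms(1) z2] h by blast
  qed
qed

lemma SA:
  assumes "c \<in> L 1" "E c z1" "E c a" "E c b" "a \<noteq> b" "\<not> E a b" "a \<in> L la" "b \<in> L lb"
    "la \<le> 2" "lb \<le> 2" "a \<noteq> z1" "b \<noteq> z1" "\<not> E a z1" "\<not> E b z1"
  shows False
proof -
  have n2: "\<not> E a z2" "\<not> E b z2" using nz2 assms by blast+
  show False
    apply (rule S_lay[of c 1 a la b lb z1 2 z2 3 z3 4 z4 5 z5 6])
    using assms z1 z2 z3 z4 z5 e12 e23 e34 e45 n2 by simp_all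
qed

lemma nsym: "\<not> E a b \<Longrightarrow> \<not> E b a" using sym by blast

lemma Sa: assumes "c \<in> L 1" "E c z1" "w \<in> L 2" "w \<noteq> z1" "E c w" shows False
proof -
  obtain s where s: "s \<in> L 0" "E c s" using assms(1) L_1 L_0 by auto
  have "\<not> E s w" using far[OF s(1) assms(3)] by simp
  hence a: "\<not> E w s" using nsym by blast
  have b: "\<not> E s z1" using far[OF s(1) z1] by simp
  have c: "\<not> E w z1" using indep assms(3) z1 by blast
  have d: "w \<noteq> s" "s \<noteq> z1" using neqL[OF assms(3) s(1)] neqL[OF s(1) z1] by auto
  show False
    by (rule SA[of c w s 2 0]) (use assms s a b c d in simp_all)
qed

lemma uonly: "w \<in> L 2 \<Longrightarrow> E u w \<Longrightarrow> w = z1"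
  using Sa[OF u1 uz1] by blast

lemma TwoNbr:
  assumes v: "v \<in> L 1" and vz: "\<not> E v z1" and w: "w1 \<in> L 2" "w2 \<in> L 2" "w1 \<noteq> w2" "E v w1" "E v w2"
  shows False
proof -
  have wz: "w1 \<noteq> z1" "w2 \<noteq> z1" using vz w by auto
  have uw: "\<not> E u w1" "\<not> E u w2" using uonly wz w by blast+
  have ww: "\<not> E w1 w2" using indep w by blast
  have wz1: "\<not> E w1 z1" "\<not> E w2 z1" using indep w z1 by blast+
  have wz2: "\<not> E w1 z2" "\<not> E w2 z2" using nz2[of w1 2] nz2[of w2 2] w wz by auto
  note F = v w z1 z2 z3 z4 z5 e12 e23 e34 e45 uz1 ux wz uw ww wz1 wz2 vz u1 x0 xy
  show False
  proof (cases "E v u")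
    case True
    show False by (rule S_lay[of v 1 w1 2 w2 2 u 1 z1 2 z2 3 z3 4 z4 5]) (use F True in simp_all)
  next
    case vu: False
    show False
    proof (cases "E v x")
      case True
      show False by (rule S_lay[of v 1 w1 2 w2 2 x 0 u 1 z1 2 z2 3 z3 4]) (use F True vu in simp_all)
    next
      case vx: False
      hence vy: "E v y" using v L_1 by auto
      show False
      proof (cases "E u y")
        case True
        show False by (rule S_lay[of v 1 w1 2 w2 2 y 0 u 1 z1 2 z2 3 z3 4]) (use F True vu vy in simp_all)
      next
        case False
        show False by (rule S_lay[of v 1 w1 2 w2 2 y 0 x 0 u 1 z1 2 z2 3]) (use F False vu vx vy in simp_all)
      qed
    qed
  qed
qed

lemma SX:
  assumes "s \<in> L 0" "E s u" "E s a" "E s b" "a \<noteq> b" "\<not> E a b" "a \<in> L la" "b \<in> L lb"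
    "la \<le> 1" "lb \<le> 1" "\<not> E a u" "\<not> E b u" "\<not> E a z1" "\<not> E b z1"
  shows False
  by (rule S_lay[of s 0 a la b lb u 1 z1 2 z2 3 z3 4 z4 5]) (use assms u1 z1 z2 z3 z4 uz1 e12 e23 e34 in simp_all)

lemma SYx:
  assumes "\<not> E u y" "E y a" "E y b" "a \<noteq> b" "\<not> E a b" "a \<in> L 1" "b \<in> L 1"
    "\<not> E a x" "\<not> E b x" "\<not> E a u" "\<not> E b u" "\<not> E a z1" "\<not> E b z1"
  shows False
  by (rule S_lay[of y 0 a 1 b 1 x 0 u 1 z1 2 z2 3 z3 4]) (use assms x0 u1 z1 z2 z3 uz1 ux xy e12 e23 in simp_all)

lemma Cside:
  assumes st: "s \<in> L 0" "t \<in> L 0" "E s t" "E s u" "E t u"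
    and v: "v \<in> L 1" "E v s" "\<not> E v t" "\<not> E v z1"
    and v': "v' \<in> L 1" "E v' s" "\<not> E v' t" "\<not> E v' z1"
  shows "v = v'"
proof (rule ccontr)
  assume ne: "v \<noteq> v'"
  have tu: "t \<noteq> u" "t \<noteq> v" "t \<noteq> v'" using neqL st u1 v v' by auto
  have nu: "\<not> E r u" if r: "r \<in> L 1" "E r s" for r
  proof
    assume ru: "E r u"
    have "{t,u} = {r,u}" by (rule nbhd[of s t u r u]) (use st r ru in \<open>auto simp: symi\<close>)
    moreover have "t \<noteq> r" using neqL st r by auto
    ultimately show False using tu by (auto simp: doubleton_eq_iff)
  qed
  show False
  proof (cases "E v v'")
    case True
    have "{t,u} = {v,v'}" by (rule nbhd[of s t u v v']) (use st v v' True in \<open>auto simp: symi\<close>)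
    thus False using tu by (auto simp: doubleton_eq_iff)
  next
    case False
    show False by (rule SX[of s v v' 1 1]) (use st v v' False ne nu[OF v(1) v(2)] nu[OF v'(1) v'(2)] in \<open>auto simp: symi\<close>)
  qed
qed

lemma card_D: "card {v \<in> L 1. \<not> E v z1 \<and> (\<exists>w\<in>L 2. E v w)} \<le> 3"
proof -
  let ?D = "{v \<in> L 1. \<not> E v z1 \<and> (\<exists>w\<in>L 2. E v w)}"
  define DA where "DA = {v \<in> L 1. E v x \<and> \<not> E v y \<and> \<not> E v z1}"
  define DB where "DB = {v \<in> L 1. E v y \<and> \<not> E v x \<and> \<not> E v z1}"
  define DC where "DC = {v \<in> L 1. E v x \<and> E v y}"
  have fin: "finite DA" "finite DB" "finite DC" unfolding DA_def DB_def DC_def using L_fin by auto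
  have sub: "?D \<subseteq> DA \<union> DC \<union> DB" unfolding DA_def DB_def DC_def using L_1 by auto
  have vu: "v \<noteq> u" if "\<not> E v z1" for v using that uz1 by auto
  have "card ?D \<le> card (DA \<union> DC \<union> DB)" by (rule card_mono) (use fin sub in auto)
  also have "\<dots> \<le> card DA + card DC + card DB"
    by (meson add_le_mono card_Un_le le_refl order_trans)
  finally have cD: "card ?D \<le> card DA + card DC + card DB" .
  have C1: "c = c'" if "c \<in> DC" "c' \<in> DC" for c c'
  proof (rule ccontr)
    assume "c \<noteq> c'"
    thus False using tri[of x y c c'] that xy unfolding DC_def by (auto simp: symi)
  qed
  have "card DC \<le> Suc 0" by (subst card_le_Suc0_iff_eq[OF fin(3)]) (use C1 in blast)
  hence cC: "card DC \<le> 1" by simp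
  show ?thesis
  proof (cases "E u y")
    case uy: True
    have DC0: "?D \<inter> DC = {}"
    proof -
      { fix v assume v: "v \<in> ?D" "v \<in> DC"
        hence "u \<noteq> v" using uz1 by auto
        hence False using tri[of x y u v] v uy ux xy unfolding DC_def by (auto simp: symi) }
      thus ?thesis by blast
    qed
    have "card ?D \<le> card (DA \<union> DB)" by (rule card_mono) (use fin sub DC0 in auto)
    also have "\<dots> \<le> card DA + card DB" by (rule card_Un_le)
    also have "card DA \<le> Suc 0" using Cside[of x y] x0 xy ux uy unfolding DA_def
      by (subst card_le_Suc0_iff_eq[OF fin(1)[unfolded DA_def]]) (auto simp: symi)
    also have "card DB \<le> Suc 0" using Cside[of y x] x0 xy ux uy unfolding DB_def
      by (subst card_le_Suc0_iff_eq[OF fin(2)[unfolded DB_def]]) (auto simp: symi)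
    finally show ?thesis by simp
  next
    case nuy: False
    have A1: "E v u" if "v \<in> DA" for v
    proof (rule ccontr)
      assume nvu: "\<not> E v u"
      have v: "v \<in> L 1" "E v x" "\<not> E v y" "\<not> E v z1" using that unfolding DA_def by auto
      have "y \<noteq> v" using neqL x0 v by auto
      moreover have "\<not> E y z1" using far[OF x0(2) z1] by simp
      ultimately show False by (rule_tac SX[of x y v 0 1]) (use v nvu nuy x0 ux xy in \<open>auto simp: symi\<close>)
    qed
    have A2: "v = v'" if "v \<in> DA" "v' \<in> DA" for v v'
    proof -
      have xv: "E x v" "E x v'" "E u v" "E u v'" "E x u" using that A1[OF that(1)] A1[OF that(2)] ux sym
        unfolding DA_def by blast+
      have "{u,v} = {u,v'}" by (rule nbhd[of x u v u v']) (fact xv)+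
      moreover have "v \<noteq> u" using that vu unfolding DA_def by auto
      ultimately show ?thesis by (auto simp: doubleton_eq_iff)
    qed
    have "card DA \<le> Suc 0" by (subst card_le_Suc0_iff_eq[OF fin(1)]) (use A2 in blast)
    hence cA: "card DA \<le> 1" by simp
    have DBv: "v \<in> L 1" "E y v" "\<not> E v x" "\<not> E v z1" if "v \<in> DB" for v
      using that sym unfolding DB_def by blast+
    have B0: "\<not> E v u" if "v \<in> DB" for v
    proof
      assume vu': "E v u"
      note v = DBv[OF that]
      have "x \<noteq> v" "x \<noteq> z1" "\<not> E x z1" using neqL x0 v z1 far[OF x0(1) z1] by auto
      moreover have "E u v" "\<not> E x v" "v \<noteq> z1" using vu' v neqL[OF v(1) z1] by (auto simp: symi)
      ultimately show False by (rule_tac SA[of u x v 0 1]) (use v u1 uz1 ux x0 in auto)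
    qed
    have B1: "E v v'" if "v \<in> DB" "v' \<in> DB" "v \<noteq> v'" for v v'
    proof (rule ccontr)
      assume "\<not> E v v'"
      thus False by (rule_tac SYx[of v v']) (use that DBv[OF that(1)] DBv[OF that(2)] B0 nuy in auto)
    qed
    have B2: False if "v \<in> DB" "v' \<in> DB" "v'' \<in> DB" "v \<noteq> v'" "v \<noteq> v''" "v' \<noteq> v''" for v v' v''
    proof -
      have "{v,v'} = {v,v''}" by (rule nbhd[of y v v' v v'']) (use that B1 DBv in blast)+
      thus False using that by (auto simp: doubleton_eq_iff)
    qed
    have cB: "card DB \<le> 2"
    proof (rule ccontr)
      assume "\<not> card DB \<le> 2"
      hence "3 \<le> card DB" by simp
      then obtain a b c where "a \<in> DB" "b \<in> DB" "c \<in> DB" "a \<noteq> b" "a \<noteq> c" "b \<noteq> c"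
        using three_elems fin by blast
      thus False using B2 by blast
    qed
    show ?thesis
    proof (cases "DC = {}")
      case True
      thus ?thesis using cD cA cB by simp
    next
      case False
      then obtain c where c: "c \<in> DC" by blast
      have "DA = {}"
      proof (rule ccontr)
        assume "DA \<noteq> {}"
        then obtain v where v: "v \<in> DA" by blast
        have "E x c" "E y c" "E x u" "E x v" "E u v" using c v A1[OF v] ux sym unfolding DC_def DA_def by blast+
        hence "{y,c} = {u,v}" using nbhd[of x y c u v] xy by blast
        moreover have "y \<noteq> u" "y \<noteq> v" using neqL x0 u1 v unfolding DA_def by auto
        ultimately show False by (auto simp: doubleton_eq_iff)
      qed
      moreover have "card DB \<le> 1"
      proof -
        { fix v v' assume v: "v \<in> DB" "v' \<in> DB" "v \<noteq> v'"
          have "E y x" "E y c" "E x c" "E y v" "E y v'" "E v v'" using c DBv[OF v(1)] DBv[OF v(2)] B1[OF v] xy sym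
            unfolding DC_def by blast+
          hence "{x,c} = {v,v'}" using nbhd[of y x c v v'] by blast
          moreover have "x \<noteq> v" "x \<noteq> v'" using neqL x0 v unfolding DB_def by auto
          ultimately have False by (auto simp: doubleton_eq_iff) }
        hence "card DB \<le> Suc 0" by (subst card_le_Suc0_iff_eq[OF fin(2)]) blast
        thus ?thesis by simp
      qed
      ultimately show ?thesis using cD cC by simp
    qed
  qed
qed

lemma card_L2: "card (L 2) \<le> 4"
proof -
  define D where "D = {v \<in> L 1. \<not> E v z1 \<and> (\<exists>w\<in>L 2. E v w)}"
  define nb where "nb w = (SOME v. v \<in> L 1 \<and> E w v)" for w
  have nbP: "nb w \<in> L 1 \<and> E w (nb w)" if "w \<in> L 2" for w
  proof -
    have "\<exists>v. v \<in> L 1 \<and> E w v" using L_pred[of w 1] that by (auto simp add: numeral_2_eq_2)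
    thus ?thesis unfolding nb_def by (rule someI_ex)
  qed
  have nbD: "nb w \<in> D" if "w \<in> L 2 - {z1}" for w
  proof -
    have a: "nb w \<in> L 1" "E (nb w) w" using nbP[of w] that by (auto simp: symi)
    have "\<not> E (nb w) z1" using Sa[of "nb w" w] a that by auto
    thus ?thesis unfolding D_def using a that by auto
  qed
  have inj: "inj_on nb (L 2 - {z1})"
  proof (rule inj_onI, rule ccontr)
    fix w1 w2 assume w: "w1 \<in> L 2 - {z1}" "w2 \<in> L 2 - {z1}" "nb w1 = nb w2" "w1 \<noteq> w2"
    have "nb w1 \<in> D" "nb w2 \<in> D" using nbD w by auto
    hence a: "nb w1 \<in> L 1" "\<not> E (nb w1) z1" unfolding D_def by auto
    have "E (nb w1) w1" "E (nb w1) w2" using nbP[of w1] nbP[of w2] w by (auto simp: symi)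
    thus False using TwoNbr[of "nb w1" w1 w2] a w by auto
  qed
  have finD: "finite D" unfolding D_def using L_fin by auto
  have "card (L 2 - {z1}) \<le> card D" by (rule card_inj_on_le[OF inj]) (use nbD finD in auto)
  also have "card D \<le> 3" unfolding D_def by (rule card_D)
  finally have "card (L 2 - {z1}) \<le> 3" .
  thus ?thesis using z1 L_fin[of 2] by (simp add: card_Diff_singleton)
qed

end
end

theorem lemma23:
  fixes V :: "'a set" and E :: "'a \<Rightarrow> 'a \<Rightarrow> bool" and x y r :: 'a
  assumes "simple_graph V E"
    and "\<not> has_induced V E 8 S115"
    and "\<not> has_induced V E 4 K4"
    and "\<not> has_induced V E 4 diamond"
    and "\<not> has_induced V E 5 butterfly"
    and "E x y" and "r \<in> V" and "E r x" and "\<not> E r y"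
    and "\<forall>u\<in>layer V E {x, y} 2. \<forall>v\<in>layer V E {x, y} 2. \<not> E u v"
    and "\<forall>v\<in>layer V E {x, y} 3. card {w \<in> layer V E {x, y} 2. E v w} = 1"
    and "card (layer V E {x, y} 2) \<ge> 5"
  shows "layer V E {x, y} 6 = {}"
proof (rule ccontr)
  assume ne: "layer V E {x, y} 6 \<noteq> {}"
  interpret G V E x y by (rule G.intro) (fact assms)+
  have sw: "{y, x} = {x, y}" by auto
  have Eyx: "E y x" using sym assms(6) by blast
  interpret G': G V E y x by (rule G.intro) (use assms Eyx in \<open>simp_all add: sw\<close>)
  obtain z5 where z5: "z5 \<in> L 6" using ne by blast
  obtain z4 where z4: "z4 \<in> L 5" "E z5 z4" using L_pred[of z5 5] z5 by auto
  obtain z3 where z3: "z3 \<in> L 4" "E z4 z3" using L_pred[of z4 4] z4 by auto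
  obtain z2 where z2: "z2 \<in> L 3" "E z3 z2" using L_pred[of z3 3] z3 by auto
  obtain z1 where z1: "z1 \<in> L 2" "E z2 z1" using L_pred[of z2 2] z2 by auto
  obtain u where u: "u \<in> L 1" "E z1 u" using L_pred[of z1 1] z1 by (auto simp: numeral_2_eq_2)
  have e: "E z1 z2" "E z2 z3" "E z3 z4" "E z4 z5" "E u z1" using z1 z2 z3 z4 u sym by blast+
  have z2u: "\<forall>w\<in>L 2. E z2 w \<longrightarrow> w = z1"
  proof -
    have "card {w \<in> L 2. E z2 w} = 1" using assms(11) z2 by blast
    then obtain a where a: "{w \<in> L 2. E z2 w} = {a}" by (rule card_1_singletonE)
    hence "z1 = a" using z1 sym by blast
    thus ?thesis using a by blast
  qed
  have "card (L 2) \<le> 4"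
  proof (cases "E u x")
    case True
    show ?thesis by (rule card_L2[OF z1(1) z2(1) z3(1) z4(1) z5 e(1-4) z2u u(1) e(5) True])
  next
    case False
    hence uy: "E u y" using u L_1 by auto
    have L': "layer V E {y, x} = layer V E {x, y}" by (simp only: sw)
    show ?thesis by (rule G'.card_L2[unfolded L', OF z1(1) z2(1) z3(1) z4(1) z5 e(1-4) z2u u(1) e(5) uy])
  qed
  thus False using assms(12) by simp
qed

end
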